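(* Let $G$ be a digraph such that $d^+_G(x)+d^-_G(x)\ge |G|+3$ for every vertex $x\in G$ and $d^+_G(x)+d^-_G(y)\ge |G|+1$ for every pair of vertices $x,y\in G$. Let $z_1,z_2$ be distinct vertices of $G$ such that $z_1z_2\notin E(G)$. Then there exists a vertex $a\in N^+_G(z_1)\cap N^-_G(z_2)$ such that $G-\{z_1,z_2,a\}$ is strongly connected.
   Context: Digraphs have no loops and at most one edge in each direction between any two vertices. $N^+_G(x)$ and $N^-_G(x)$ are the out- and in-neighbourhoods of $x$ in $G$, and $d^\pm_G(x)=|N^\pm_G(x)|$. A digraph is strongly connected if for every ordered pair $x,y$ of vertices there is a directed $x$-$y$ path. *)

theory Defs
  imports Main
begin

definition digraph :: "'a set \<Rightarrow> ('a \<times> 'a) set \<Rightarrow> bool" where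
  "digraph V E \<longleftrightarrow> finite V \<and> E \<subseteq> V \<times> V \<and> (\<forall>x. (x, x) \<notin> E)"

definition out_nbrs :: "('a \<times> 'a) set \<Rightarrow> 'a \<Rightarrow> 'a set" where
  "out_nbrs E x = {y. (x, y) \<in> E}"

definition in_nbrs :: "('a \<times> 'a) set \<Rightarrow> 'a \<Rightarrow> 'a set" where
  "in_nbrs E x = {y. (y, x) \<in> E}"

definition outdeg :: "('a \<times> 'a) set \<Rightarrow> 'a \<Rightarrow> nat" where
  "outdeg E x = card (out_nbrs E x)"

definition indeg :: "('a \<times> 'a) set \<Rightarrow> 'a \<Rightarrow> nat" where
  "indeg E x = card (in_nbrs E x)"

definition del_verts_E :: "'a set \<Rightarrow> ('a \<times> 'a) set \<Rightarrow> 'a set \<Rightarrow> ('a \<times> 'a) set" where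
  "del_verts_E V E S = E \<inter> ((V - S) \<times> (V - S))"

definition strongly_connected :: "'a set \<Rightarrow> ('a \<times> 'a) set \<Rightarrow> bool" where
  "strongly_connected V E \<longleftrightarrow> (\<forall>x\<in>V. \<forall>y\<in>V. (x, y) \<in> (E \<inter> (V \<times> V))\<^sup>*)"

end

theory Submission
  imports Defs
begin

lemma out_sub: "digraph V E \<Longrightarrow> out_nbrs E x \<subseteq> V - {x}"
  unfolding digraph_def out_nbrs_def by auto

lemma in_sub: "digraph V E \<Longrightarrow> in_nbrs E x \<subseteq> V - {x}"
  unfolding digraph_def in_nbrs_def by auto

lemma bad_struct:
  assumes G: "digraph V E"
    and self: "\<forall>x\<in>V. outdeg E x + indeg E x \<ge> card V + 3"
    and pair: "\<forall>x\<in>V. \<forall>y\<in>V. x \<noteq> y \<longrightarrow> outdeg E x + indeg E y \<ge> card V + 1"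
    and z: "z1 \<in> V" "z2 \<in> V" "a \<in> V" "z1\<noteq>z2" "z1\<noteq>a" "z2\<noteq>a"
    and ST: "S \<union> T = V - {z1,z2,a}" "S \<inter> T = {}" "S \<noteq> {}" "T \<noteq> {}"
    and noedge: "\<forall>u\<in>S. \<forall>v\<in>T. (u,v) \<notin> E"
  shows "card S + card T + 3 = card V"
   "\<forall>x\<in>S. outdeg E x \<le> card S + 2" "\<forall>y\<in>T. indeg E y \<le> card T + 2"
   "\<forall>x\<in>S. (x,a) \<in> E" "\<forall>y\<in>T. (a,y)\<in>E"
   "\<forall>w\<in>V. indeg E w \<ge> card T + 2" "\<forall>w\<in>V. outdeg E w \<ge> card S + 2"
proof -
  have fV: "finite V" using G unfolding digraph_def by auto
  have fS: "finite S" "finite T" using ST(1) fV by (metis finite_Diff finite_Un)+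
  have c3: "card {z1,z2,a} = 3" using z by auto
  have "card (V - {z1,z2,a}) = card V - 3"
    using c3 z fV by (subst card_Diff_subset) auto
  moreover have "card {z1,z2,a} \<le> card V" using z fV by (intro card_mono) auto
  moreover have "card (S \<union> T) = card S + card T" using fS ST(2) by (simp add: card_Un_disjoint)
  ultimately show C: "card S + card T + 3 = card V" using ST(1) c3 by simp
  have EV: "E \<subseteq> V \<times> V" and nl: "\<forall>x. (x,x) \<notin> E" using G unfolding digraph_def by auto
  have outS: "outdeg E x \<le> card S + 2 - (if (x,a) \<in> E then 0 else 1)" if "x \<in> S" for x
  proof -
    have sub: "out_nbrs E x \<subseteq> (S - {x}) \<union> ({z1,z2} \<union> (if (x,a) \<in> E then {a} else {}))"
      using EV nl noedge that ST(1) unfolding out_nbrs_def by auto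
    have "card (out_nbrs E x) \<le> card ((S - {x}) \<union> ({z1,z2} \<union> (if (x,a) \<in> E then {a} else {})))"
      using sub fS by (intro card_mono) auto
    also have "\<dots> \<le> card (S - {x}) + card ({z1,z2} \<union> (if (x,a) \<in> E then {a} else {}))"
      by (rule card_Un_le)
    also have "card ({z1,z2} \<union> (if (x,a) \<in> E then {a} else {})) \<le> 2 + (if (x,a) \<in> E then 1 else 0)"
      by (auto simp: card_insert_if)
    also have "card (S - {x}) = card S - 1" using that fS by simp
    finally show ?thesis unfolding outdeg_def using that fS card_gt_0_iff[of S]
      by (auto split: if_splits)
  qed
  have inT: "indeg E y \<le> card T + 2 - (if (a,y) \<in> E then 0 else 1)" if "y \<in> T" for y
  proof -
    have sub: "in_nbrs E y \<subseteq> (T - {y}) \<union> ({z1,z2} \<union> (if (a,y) \<in> E then {a} else {}))"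
      using EV nl noedge that ST(1) unfolding in_nbrs_def by auto
    have "card (in_nbrs E y) \<le> card ((T - {y}) \<union> ({z1,z2} \<union> (if (a,y) \<in> E then {a} else {})))"
      using sub fS by (intro card_mono) auto
    also have "\<dots> \<le> card (T - {y}) + card ({z1,z2} \<union> (if (a,y) \<in> E then {a} else {}))"
      by (rule card_Un_le)
    also have "card ({z1,z2} \<union> (if (a,y) \<in> E then {a} else {})) \<le> 2 + (if (a,y) \<in> E then 1 else 0)"
      by (auto simp: card_insert_if)
    also have "card (T - {y}) = card T - 1" using that fS by simp
    finally show ?thesis unfolding indeg_def using that fS card_gt_0_iff[of T]
      by (auto split: if_splits)
  qed
  show o: "\<forall>x\<in>S. outdeg E x \<le> card S + 2"
  proof
    fix x assume "x \<in> S" from outS[OF this] show "outdeg E x \<le> card S + 2" by (simp split: if_splits)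
  qed
  show i: "\<forall>y\<in>T. indeg E y \<le> card T + 2"
  proof
    fix x assume "x \<in> T" from inT[OF this] show "indeg E x \<le> card T + 2" by (simp split: if_splits)
  qed
  have SV: "S \<subseteq> V" "T \<subseteq> V" using ST(1) by auto
  have pr: "outdeg E x + indeg E y \<ge> card S + card T + 4" if "x \<in> S" "y \<in> T" for x y
  proof -
    have "x \<in> V" "y \<in> V" "x \<noteq> y" using that SV ST(2) by auto
    hence "outdeg E x + indeg E y \<ge> card V + 1" using pair by blast
    thus ?thesis using C by linarith
  qed
  show "\<forall>x\<in>S. (x,a) \<in> E"
  proof
    fix x assume x: "x \<in> S"
    obtain y where y: "y \<in> T" using ST(4) by auto
    show "(x,a) \<in> E" using pr[OF x y] outS[OF x] i y by (auto split: if_splits)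
  qed
  show "\<forall>y\<in>T. (a,y) \<in> E"
  proof
    fix y assume y: "y \<in> T"
    obtain x where x: "x \<in> S" using ST(3) by auto
    show "(a,y) \<in> E" using pr[OF x y] inT[OF y] o x by (auto split: if_splits)
  qed
  have s2: "card S \<ge> 2"
  proof -
    obtain x where x: "x \<in> S" using ST(3) by auto
    have "indeg E x \<le> card V - 1" unfolding indeg_def
      using card_mono[OF _ in_sub[OF G, of x]] fV x SV by auto
    moreover have "outdeg E x + indeg E x \<ge> card V + 3" using self x SV by auto
    moreover have "outdeg E x \<le> card S + 2" using o x by auto
    ultimately show ?thesis using C by arith
  qed
  have t2: "card T \<ge> 2"
  proof -
    obtain y where y: "y \<in> T" using ST(4) by auto
    have "outdeg E y \<le> card V - 1" unfolding outdeg_def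
      using card_mono[OF _ out_sub[OF G, of y]] fV y SV by auto
    moreover have "outdeg E y + indeg E y \<ge> card V + 3" using self y SV by auto
    moreover have "indeg E y \<le> card T + 2" using i y by auto
    ultimately show ?thesis using C by arith
  qed
  show "\<forall>w\<in>V. indeg E w \<ge> card T + 2"
  proof
    fix w assume w: "w \<in> V"
    have "S - {w} \<noteq> {}"
    proof
      assume "S - {w} = {}"
      hence "S \<subseteq> {w}" by auto
      hence "card S \<le> 1" using card_mono[of "{w}" S] by simp
      thus False using s2 by simp
    qed
    then obtain x where x: "x \<in> S" "x \<noteq> w" by blast
    have "x \<in> V" using x SV by auto
    hence "outdeg E x + indeg E w \<ge> card V + 1" using pair x w by blast
    moreover have "outdeg E x \<le> card S + 2" using o x by blast
    ultimately show "indeg E w \<ge> card T + 2" using C by linarith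
  qed
  show "\<forall>w\<in>V. outdeg E w \<ge> card S + 2"
  proof
    fix w assume w: "w \<in> V"
    have "T - {w} \<noteq> {}"
    proof
      assume "T - {w} = {}"
      hence "T \<subseteq> {w}" by auto
      hence "card T \<le> 1" using card_mono[of "{w}" T] by simp
      thus False using t2 by simp
    qed
    then obtain y where y: "y \<in> T" "y \<noteq> w" by blast
    have "y \<in> V" using y SV by auto
    moreover have "w \<noteq> y" using y by auto
    ultimately have "outdeg E w + indeg E y \<ge> card V + 1" using pair w by blast
    moreover have "indeg E y \<le> card T + 2" using i y by blast
    ultimately show "outdeg E w \<ge> card S + 2" using C by linarith
  qed
qed


lemma not_sc:
  assumes "\<not> strongly_connected W (E \<inter> (W \<times> W))"
  shows "\<exists>S T. S \<union> T = W \<and> S \<inter> T = {} \<and> S \<noteq> {} \<and> T \<noteq> {} \<and> (\<forall>u\<in>S. \<forall>v\<in>T. (u,v) \<notin> E)"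
proof -
  define R where "R = E \<inter> (W \<times> W) \<inter> (W \<times> W)"
  obtain x y where xy: "x \<in> W" "y \<in> W" "(x,y) \<notin> R\<^sup>*"
    using assms unfolding strongly_connected_def R_def by blast
  define S where "S = {v\<in>W. (x,v) \<in> R\<^sup>*}"
  define T where "T = W - S"
  have xS: "x \<in> S" using xy unfolding S_def by simp
  have yT: "y \<in> T" using xy unfolding S_def T_def by simp
  have ne: "\<forall>u\<in>S. \<forall>v\<in>T. (u,v) \<notin> E"
  proof (intro ballI notI)
    fix u v assume u: "u \<in> S" and v: "v \<in> T" and e: "(u,v) \<in> E"
    have uW: "u \<in> W" and xu: "(x,u) \<in> R\<^sup>*" using u unfolding S_def by simp_all
    have vW: "v \<in> W" and vS: "v \<notin> S" using v unfolding T_def by simp_all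
    have "(u,v) \<in> R" using uW vW e unfolding R_def by simp
    hence "(x,v) \<in> R\<^sup>*" using xu by (rule rtrancl_into_rtrancl[rotated])
    thus False using vS vW unfolding S_def by simp
  qed
  have "S \<union> T = W" "S \<inter> T = {}" unfolding T_def S_def by auto
  thus ?thesis using xS yT ne by blast
qed

lemma two_bad:
  assumes G: "digraph V E"
    and self: "\<forall>x\<in>V. outdeg E x + indeg E x \<ge> card V + 3"
    and pair: "\<forall>x\<in>V. \<forall>y\<in>V. x \<noteq> y \<longrightarrow> outdeg E x + indeg E y \<ge> card V + 1"
    and z: "z1 \<in> V" "z2 \<in> V" "a \<in> V" "z1\<noteq>z2" "z1\<noteq>a" "z2\<noteq>a"
    and z': "b \<in> V" "z1\<noteq>b" "z2\<noteq>b" "a \<noteq> b"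
    and ST: "S \<union> T = V - {z1,z2,a}" "S \<inter> T = {}" "S \<noteq> {}" "T \<noteq> {}"
    and noedge: "\<forall>u\<in>S. \<forall>v\<in>T. (u,v) \<notin> E"
    and ST': "S' \<union> T' = V - {z1,z2,b}" "S' \<inter> T' = {}" "S' \<noteq> {}" "T' \<noteq> {}"
    and noedge': "\<forall>u\<in>S'. \<forall>v\<in>T'. (u,v) \<notin> E"
  shows False
proof -
  note A = bad_struct[OF G self pair z ST noedge]
  note B = bad_struct[OF G self pair z(1,2) z'(1) z(4) z'(2,3) ST' noedge']
  have fV: "finite V" using G unfolding digraph_def by auto
  have fS: "finite S" "finite T" "finite S'" "finite T'" using ST(1) ST'(1) fV by (metis finite_Diff finite_Un)+
  obtain y where y: "y \<in> T" using ST(4) by auto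
  obtain y' where y': "y' \<in> T'" using ST'(4) by auto
  have "y \<in> V" "y' \<in> V" using y y' ST(1) ST'(1) by auto
  have "card T' \<le> card T" using A(3) B(6) y \<open>y \<in> V\<close>
    by (metis add_le_cancel_right le_trans)
  moreover have "card T \<le> card T'" using B(3) A(6) y' \<open>y' \<in> V\<close>
    by (metis add_le_cancel_right le_trans)
  ultimately have tt: "card T = card T'" by simp
  hence ss: "card S = card S'" using A(1) B(1) by simp
  have d1: "S \<inter> T' = {}"
  proof (rule ccontr)
    assume "S \<inter> T' \<noteq> {}"
    then obtain v where v: "v \<in> S" "v \<in> T'" by auto
    have "outdeg E v \<le> card S + 2" using A(2) v by auto
    moreover have "indeg E v \<le> card T' + 2" using B(3) v by auto
    moreover have "outdeg E v + indeg E v \<ge> card V + 3" using self v ST(1) by auto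
    ultimately show False using A(1) tt by linarith
  qed
  have d2: "T \<inter> S' = {}"
  proof (rule ccontr)
    assume "T \<inter> S' \<noteq> {}"
    then obtain v where v: "v \<in> T" "v \<in> S'" by auto
    have "outdeg E v \<le> card S' + 2" using B(2) v by auto
    moreover have "indeg E v \<le> card T + 2" using A(3) v by auto
    moreover have "outdeg E v + indeg E v \<ge> card V + 3" using self v ST(1) by auto
    ultimately show False using A(1) ss by linarith
  qed
  have "b \<in> S \<union> T" using ST(1) z z' by auto
  then show False
  proof
    assume bS: "b \<in> S"
    have "T \<subseteq> T'" using ST ST' d2 bS by blast
    hence "T = T'" using tt fS by (simp add: card_subset_eq)
    moreover have "a \<in> S' \<union> T'" using ST'(1) z z' by auto
    moreover have "a \<notin> T" using ST(1) by auto
    ultimately have "a \<in> S'" by auto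
    thus False using A(5) y noedge' \<open>T = T'\<close> by auto
  next
    assume bT: "b \<in> T"
    have "S \<subseteq> S'" using ST ST' d1 bT by blast
    hence "S = S'" using ss fS by (simp add: card_subset_eq)
    moreover have "a \<in> S' \<union> T'" using ST'(1) z z' by auto
    moreover have "a \<notin> S" using ST(1) by auto
    ultimately have "a \<in> T'" by auto
    obtain x where x: "x \<in> S" using ST(3) by auto
    thus False using A(4) \<open>a \<in> T'\<close> noedge' \<open>S = S'\<close> by auto
  qed
qed

theorem lemma9:
  fixes V :: "'a set" and E :: "('a \<times> 'a) set" and z1 z2 :: 'a
  assumes "digraph V E"
    and "\<forall>x\<in>V. outdeg E x + indeg E x \<ge> card V + 3"
    and "\<forall>x\<in>V. \<forall>y\<in>V. x \<noteq> y \<longrightarrow> outdeg E x + indeg E y \<ge> card V + 1"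
    and "z1 \<in> V" and "z2 \<in> V" and "z1 \<noteq> z2"
    and "(z1, z2) \<notin> E"
  shows "\<exists>a \<in> out_nbrs E z1 \<inter> in_nbrs E z2.
           strongly_connected (V - {z1, z2, a}) (del_verts_E V E {z1, z2, a})"
proof (rule ccontr)
  assume neg: "\<not> ?thesis"
  let ?P = "out_nbrs E z1" and ?Q = "in_nbrs E z2"
  have fV: "finite V" using assms(1) unfolding digraph_def by auto
  have PU: "?P \<subseteq> V - {z1,z2}" using out_sub[OF assms(1), of z1] assms(7)
    unfolding out_nbrs_def by auto
  have QU: "?Q \<subseteq> V - {z1,z2}" using in_sub[OF assms(1), of z2] assms(7)
    unfolding in_nbrs_def by auto
  have fPQ: "finite ?P" "finite ?Q" using PU QU fV finite_subset by blast+
  have "card (?P \<union> ?Q) \<le> card (V - {z1,z2})" using PU QU fV by (intro card_mono) auto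
  also have "\<dots> = card V - 2" using assms(4,5,6) fV by (subst card_Diff_subset) auto
  finally have u: "card (?P \<union> ?Q) \<le> card V - 2" .
  have "card ?P + card ?Q = card (?P \<union> ?Q) + card (?P \<inter> ?Q)"
    using fPQ by (rule card_Un_Int)
  moreover have "card ?P + card ?Q \<ge> card V + 1"
    using assms(3,4,5,6) unfolding outdeg_def indeg_def by auto
  moreover have "card {z1,z2} \<le> card V" using assms(4,5) fV by (intro card_mono) auto
  ultimately have "card (?P \<inter> ?Q) \<ge> 2" using u assms(6) by simp
  hence "?P \<inter> ?Q \<noteq> {}" by (metis card.empty not_numeral_le_zero)
  then obtain a where a: "a \<in> ?P \<inter> ?Q" by blast
  have "?P \<inter> ?Q - {a} \<noteq> {}"
  proof
    assume "?P \<inter> ?Q - {a} = {}"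
    hence "?P \<inter> ?Q \<subseteq> {a}" by blast
    hence "card (?P \<inter> ?Q) \<le> 1" using card_mono[of "{a}" "?P \<inter> ?Q"] by simp
    thus False using \<open>card (?P \<inter> ?Q) \<ge> 2\<close> by simp
  qed
  then obtain b where "b \<in> ?P \<inter> ?Q - {a}" by blast
  hence ab: "a \<in> ?P \<inter> ?Q" "b \<in> ?P \<inter> ?Q" "a \<noteq> b" using a by auto
  have aV: "a \<in> V" "z1 \<noteq> a" "z2 \<noteq> a" "b \<in> V" "z1 \<noteq> b" "z2 \<noteq> b" using ab PU by auto
  have nsa: "\<not> strongly_connected (V - {z1,z2,a}) (E \<inter> ((V - {z1,z2,a}) \<times> (V - {z1,z2,a})))"
    using neg ab unfolding del_verts_E_def by auto
  have nsb: "\<not> strongly_connected (V - {z1,z2,b}) (E \<inter> ((V - {z1,z2,b}) \<times> (V - {z1,z2,b})))"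
    using neg ab unfolding del_verts_E_def by auto
  obtain S T where ST: "S \<union> T = V - {z1,z2,a}" "S \<inter> T = {}" "S \<noteq> {}" "T \<noteq> {}"
    "\<forall>u\<in>S. \<forall>v\<in>T. (u,v) \<notin> E" using not_sc[OF nsa] by blast
  obtain S' T' where ST': "S' \<union> T' = V - {z1,z2,b}" "S' \<inter> T' = {}" "S' \<noteq> {}" "T' \<noteq> {}"
    "\<forall>u\<in>S'. \<forall>v\<in>T'. (u,v) \<notin> E" using not_sc[OF nsb] by blast
  show False
    using two_bad[OF assms(1,2,3,4,5) aV(1) assms(6) aV(2,3) aV(4,5,6) ab(3) ST ST'] .
qed

end
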